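(* Let $R_0^*\in SO(3)$ with unit quaternion representation $w_0^*$, and let $(y_i,x_i)$ satisfy $y_i=R_0^*x_i+\epsilon_i$ with $\epsilon_i\in\mathbb{R}^3$. Then for every $R_0\in SO(3)$ with unit quaternion representation $w_0$, $\|y_i-R_0x_i\|_2^2=w_0^\top Q_iw_0$, and $Q_i=P_i+E_i+\|\epsilon_i\|_2^2I_4$ for symmetric $4\times4$ matrices $P_i,E_i$ with the following properties: (a) $P_i$ is positive semidefinite with eigenvalues $4\|x_i\|_2^2,4\|x_i\|_2^2,0,0$ (with multiplicity), and $P_iw_0^*=0$; in particular $Q_iw_0^*=P_iw_0^*=0$ in the noiseless case $\epsilon_i=0$; (b) $E_i$ has eigenvalues $2\epsilon_i^\top R_0^*x_i+2\|\epsilon_i\|_2\|x_i\|_2$ and $2\epsilon_i^\top R_0^*x_i-2\|\epsilon_i\|_2\|x_i\|_2$, each of multiplicity $2$; for every $R_0\in SO(3)$ with unit quaternion representation $w_0$ we have $w_0^\top E_iw_0=2\epsilon_i^\top(R_0^*x_i-R_0x_i)$, and in particular $(w_0^* )^\top E_iw_0^*=0$.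
   Context: For $w=[w_1;w_2;w_3;w_4]\in\mathbb{S}^3$, $R(w)=\begin{bmatrix} w_1^2+w_2^2-w_3^2-w_4^2 & 2(w_2w_3-w_1w_4) & 2(w_2w_4+w_1w_3)\\ 2(w_2w_3+w_1w_4) & w_1^2+w_3^2-w_2^2-w_4^2 & 2(w_3w_4-w_1w_2)\\ 2(w_2w_4-w_1w_3) & 2(w_3w_4+w_1w_2) & w_1^2+w_4^2-w_2^2-w_3^2\end{bmatrix}\in SO(3)$; every rotation equals $R(w)$ for exactly two $w=\pm w$, its unit quaternion representations. $Q_i$ is the unique symmetric $4\times4$ matrix with $w^\top Q_iw=\|y_i-R(w)x_i\|_2^2$ for all $w\in\mathbb{S}^3$. *)

theory Defs
  imports "HOL-Analysis.Analysis" "HOL-Library.Multiset"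
begin

definition quat_rot :: "real^4 \<Rightarrow> real^3^3" where
  "quat_rot w = (let w1 = w$1; w2 = w$2; w3 = w$3; w4 = w$4 in
     vector [
       vector [w1^2+w2^2-w3^2-w4^2, 2*(w2*w3-w1*w4), 2*(w2*w4+w1*w3)],
       vector [2*(w2*w3+w1*w4), w1^2+w3^2-w2^2-w4^2, 2*(w3*w4-w1*w2)],
       vector [2*(w2*w4-w1*w3), 2*(w3*w4+w1*w2), w1^2+w4^2-w2^2-w3^2]])"

definition SO3 :: "(real^3^3) set" where
  "SO3 = {R. orthogonal_matrix R \<and> det R = 1}"

definition symmetric_mat :: "real^'n^'n \<Rightarrow> bool" where
  "symmetric_mat A \<longleftrightarrow> transpose A = A"

definition psd_mat :: "real^'n^'n \<Rightarrow> bool" where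
  "psd_mat A \<longleftrightarrow> (\<forall>v. 0 \<le> v \<bullet> (A *v v))"

text \<open>The eigenvalues of A, counted with (algebraic) multiplicity, are the multiset M:
  the characteristic polynomial det(tI - A) equals the product of (t - lambda) over M.\<close>
definition eigenvalues_mset :: "real^'n^'n \<Rightarrow> real multiset \<Rightarrow> bool" where
  "eigenvalues_mset A M \<longleftrightarrow> size M = CARD('n) \<and>
     (\<forall>t. det (mat t - A) = prod_mset (image_mset (\<lambda>l. t - l) M))"

definition Qmat :: "real^3 \<Rightarrow> real^3 \<Rightarrow> real^4^4" where
  "Qmat y x = (THE Q. symmetric_mat Q \<and>
     (\<forall>w::real^4. norm w = 1 \<longrightarrow> w \<bullet> (Q *v w) = (norm (y - quat_rot w *v x))^2))"

end

theory Submission imports Defs begin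


lemma vector_4 [simp]:
 "(vector [a,b,c,d] ::('a::zero)^4)$1 = a"
 "(vector [a,b,c,d] ::('a::zero)^4)$2 = b"
 "(vector [a,b,c,d] ::('a::zero)^4)$3 = c"
 "(vector [a,b,c,d] ::('a::zero)^4)$4 = d"
  unfolding vector_def by simp_all

lemma sign_tr_comp: "permutation q \<Longrightarrow> sign (Transposition.transpose a b \<circ> q) = (if a = b then sign q else - sign q)"
  by (simp add: sign_compose permutation_swap_id sign_swap_id)

lemma det_4:
  "det (A::'a::comm_ring_1^4^4) =
  A$1$1*A$2$2*A$3$3*A$4$4 - A$1$1*A$2$2*A$3$4*A$4$3 - A$1$1*A$2$3*A$3$2*A$4$4
 + A$1$1*A$2$3*A$3$4*A$4$2 + A$1$1*A$2$4*A$3$2*A$4$3 - A$1$1*A$2$4*A$3$3*A$4$2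
 - A$1$2*A$2$1*A$3$3*A$4$4 + A$1$2*A$2$1*A$3$4*A$4$3 + A$1$2*A$2$3*A$3$1*A$4$4
 - A$1$2*A$2$3*A$3$4*A$4$1 - A$1$2*A$2$4*A$3$1*A$4$3 + A$1$2*A$2$4*A$3$3*A$4$1
 + A$1$3*A$2$1*A$3$2*A$4$4 - A$1$3*A$2$1*A$3$4*A$4$2 - A$1$3*A$2$2*A$3$1*A$4$4
 + A$1$3*A$2$2*A$3$4*A$4$1 + A$1$3*A$2$4*A$3$1*A$4$2 - A$1$3*A$2$4*A$3$2*A$4$1
 - A$1$4*A$2$1*A$3$2*A$4$3 + A$1$4*A$2$1*A$3$3*A$4$2 + A$1$4*A$2$2*A$3$1*A$4$3
 - A$1$4*A$2$2*A$3$3*A$4$1 - A$1$4*A$2$3*A$3$1*A$4$2 + A$1$4*A$2$3*A$3$2*A$4$1"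
proof -
  have f1: "finite {2::4, 3, 4}" "1 \<notin> {2::4, 3, 4}" by auto
  have f2: "finite {3::4, 4}" "2 \<notin> {3::4, 4}" by auto
  have f3: "finite {4::4}" "3 \<notin> {4::4}" by auto
  show ?thesis
    unfolding det_def UNIV_4
    unfolding sum_over_permutations_insert[OF f1]
    unfolding sum_over_permutations_insert[OF f2]
    unfolding sum_over_permutations_insert[OF f3]
    unfolding permutes_sing
    by (simp add: sign_tr_comp permutation_compose sign_swap_id permutation_swap_id sign_id swap_id_eq algebra_simps)
qed

definition Bm :: "real^3 \<Rightarrow> real^3 \<Rightarrow> real^4^4" where
  "Bm a x = (let a1 = a$1; a2 = a$2; a3 = a$3; x1 = x$1; x2 = x$2; x3 = x$3 in
    vector [
     vector [a1*x1+a2*x2+a3*x3, a3*x2-a2*x3, a1*x3-a3*x1, a2*x1-a1*x2],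
     vector [a3*x2-a2*x3, a1*x1-a2*x2-a3*x3, a1*x2+a2*x1, a1*x3+a3*x1],
     vector [a1*x3-a3*x1, a1*x2+a2*x1, -a1*x1+a2*x2-a3*x3, a2*x3+a3*x2],
     vector [a2*x1-a1*x2, a1*x3+a3*x1, a2*x3+a3*x2, -a1*x1-a2*x2+a3*x3]])"

lemmas coords = inner_vec_def sum_4 sum_3 matrix_vector_mult_def quat_rot_def Bm_def Let_def
   vector_3 vector_4 power2_norm_eq_inner

lemma quadB: "w \<bullet> (Bm a x *v w) = a \<bullet> (quat_rot w *v x)"
  apply (simp add: coords)
  by (simp add: algebra_simps power2_eq_square)

lemma normR: "(norm (quat_rot w *v x))^2 = ((norm w)^2)^2 * (norm x)^2"
  apply (simp add: coords)
  by (simp add: algebra_simps power2_eq_square)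



lemma Bm_c:
  "Bm a x $1$1 = a$1*x$1+a$2*x$2+a$3*x$3" "Bm a x $1$2 = a$3*x$2-a$2*x$3"
  "Bm a x $1$3 = a$1*x$3-a$3*x$1" "Bm a x $1$4 = a$2*x$1-a$1*x$2"
  "Bm a x $2$1 = a$3*x$2-a$2*x$3" "Bm a x $2$2 = a$1*x$1-a$2*x$2-a$3*x$3"
  "Bm a x $2$3 = a$1*x$2+a$2*x$1" "Bm a x $2$4 = a$1*x$3+a$3*x$1"
  "Bm a x $3$1 = a$1*x$3-a$3*x$1" "Bm a x $3$2 = a$1*x$2+a$2*x$1"
  "Bm a x $3$3 = -a$1*x$1+a$2*x$2-a$3*x$3" "Bm a x $3$4 = a$2*x$3+a$3*x$2"
  "Bm a x $4$1 = a$2*x$1-a$1*x$2" "Bm a x $4$2 = a$1*x$3+a$3*x$1"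
  "Bm a x $4$3 = a$2*x$3+a$3*x$2" "Bm a x $4$4 = -a$1*x$1-a$2*x$2+a$3*x$3"
  by (simp_all add: Bm_def Let_def)

lemma mat_eq4: "(A::'a^4^4) = B \<longleftrightarrow>
  A$1$1 = B$1$1 \<and> A$1$2 = B$1$2 \<and> A$1$3 = B$1$3 \<and> A$1$4 = B$1$4 \<and>
  A$2$1 = B$2$1 \<and> A$2$2 = B$2$2 \<and> A$2$3 = B$2$3 \<and> A$2$4 = B$2$4 \<and>
  A$3$1 = B$3$1 \<and> A$3$2 = B$3$2 \<and> A$3$3 = B$3$3 \<and> A$3$4 = B$3$4 \<and>
  A$4$1 = B$4$1 \<and> A$4$2 = B$4$2 \<and> A$4$3 = B$4$3 \<and> A$4$4 = B$4$4"
  by (simp add: vec_eq_iff forall_4)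

lemma vec_eq4: "(v::'a^4) = u \<longleftrightarrow> v$1 = u$1 \<and> v$2 = u$2 \<and> v$3 = u$3 \<and> v$4 = u$4"
  by (simp add: vec_eq_iff forall_4)

lemma Bm_add: "Bm (a + b) x = Bm a x + Bm b x"
  unfolding mat_eq4 by (simp add: Bm_c algebra_simps)

lemma Bm_0: "Bm 0 x = 0"
  unfolding mat_eq4 by (simp add: Bm_c)

lemma symB: "transpose (Bm a x) = Bm a x"
  unfolding mat_eq4 by (simp add: Bm_c transpose_def)


lemma R_c:
  "quat_rot w $1$1 = (w$1)^2+(w$2)^2-(w$3)^2-(w$4)^2"
  "quat_rot w $1$2 = 2*(w$2*w$3-w$1*w$4)"
  "quat_rot w $1$3 = 2*(w$2*w$4+w$1*w$3)"
  "quat_rot w $2$1 = 2*(w$2*w$3+w$1*w$4)"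
  "quat_rot w $2$2 = (w$1)^2+(w$3)^2-(w$2)^2-(w$4)^2"
  "quat_rot w $2$3 = 2*(w$3*w$4-w$1*w$2)"
  "quat_rot w $3$1 = 2*(w$2*w$4-w$1*w$3)"
  "quat_rot w $3$2 = 2*(w$3*w$4+w$1*w$2)"
  "quat_rot w $3$3 = (w$1)^2+(w$4)^2-(w$2)^2-(w$3)^2"
  by (simp_all add: quat_rot_def Let_def)

lemma Rx_c:
  "(quat_rot w *v x)$1 = quat_rot w $1$1 * x$1 + quat_rot w $1$2 * x$2 + quat_rot w $1$3 * x$3"
  "(quat_rot w *v x)$2 = quat_rot w $2$1 * x$1 + quat_rot w $2$2 * x$2 + quat_rot w $2$3 * x$3"
  "(quat_rot w *v x)$3 = quat_rot w $3$1 * x$1 + quat_rot w $3$2 * x$2 + quat_rot w $3$3 * x$3"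
  by (simp_all add: matrix_vector_mult_def sum_3)

lemma mv4: "(A *v (v::real^4))$i = A$i$1 * v$1 + A$i$2 * v$2 + A$i$3 * v$3 + A$i$4 * v$4"
  by (simp add: matrix_vector_mult_def sum_4)

lemma kerB: "Bm (quat_rot w *v x) x *v w = (((norm w)^2) * (norm x)^2) *\<^sub>R w"
  unfolding vec_eq4 mv4 Bm_c Rx_c R_c power2_norm_eq_inner
  by (simp add: inner_vec_def sum_4 sum_3 algebra_simps power2_eq_square)

lemma detB: "det (mat t - (c *\<^sub>R mat 1 - 2 *\<^sub>R Bm a x)) = ((t-c)^2 - 4*(norm a)^2*(norm x)^2)^2"
  unfolding det_4 power2_norm_eq_inner
  apply (simp add: mat_def Bm_c inner_vec_def sum_3)
  by (simp add: algebra_simps power2_eq_square)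

definition Qf :: "real^3 \<Rightarrow> real^3 \<Rightarrow> real^4^4" where
  "Qf y x = ((norm y)^2 + (norm x)^2) *\<^sub>R mat 1 - 2 *\<^sub>R Bm y x"

lemma tr_diff: "transpose (A - B) = transpose A - transpose (B::real^'n^'n)"
  by (simp add: transpose_def vec_eq_iff)

lemma mv_scale: "(c *\<^sub>R A) *v v = c *\<^sub>R (A *v (v::real^'n))"
  by (metis scaleR_matrix_vector_assoc)

lemma sym_cB: "symmetric_mat (c *\<^sub>R mat 1 - 2 *\<^sub>R Bm a x)"
  unfolding symmetric_mat_def by (simp add: tr_diff transpose_scalar symB)

lemma sym_Qf: "symmetric_mat (Qf y x)"
  unfolding Qf_def by (rule sym_cB)

lemma quad_cB: "w \<bullet> ((c *\<^sub>R mat 1 - 2 *\<^sub>R Bm a x) *v w) = c * (w \<bullet> w) - 2 * (a \<bullet> (quat_rot w *v x))"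
  by (simp add: matrix_vector_mult_diff_rdistrib mv_scale inner_diff_right quadB)

lemma quadQ: "w \<bullet> (Qf y x *v w) = ((norm y)^2 + (norm x)^2) * (norm w)^2 - 2 * (y \<bullet> (quat_rot w *v x))"
  unfolding Qf_def quad_cB by (simp add: power2_norm_eq_inner)

lemma quadQ_unit:
  assumes "norm w = 1"
  shows "w \<bullet> (Qf y x *v w) = (norm (y - quat_rot w *v x))^2"
proof -
  have h: "(quat_rot w *v x) \<bullet> (quat_rot w *v x) = x \<bullet> x"
    using normR[of w x] assms by (simp add: power2_norm_eq_inner)
  have h2: "w \<bullet> w = 1" using assms by (simp add: power2_norm_eq_inner[symmetric])
  show ?thesis
    by (simp add: quadQ power2_norm_eq_inner inner_diff_left inner_diff_right inner_commute h h2)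
qed

lemma zero_form:
  fixes D :: "real^'n^'n"
  assumes sym: "symmetric_mat D" and z: "\<forall>w. norm w = 1 \<longrightarrow> w \<bullet> (D *v w) = 0"
  shows "D = 0"
proof -
  have all: "v \<bullet> (D *v v) = 0" for v
  proof (cases "v = 0")
    case True then show ?thesis by simp
  next
    case False
    define u where "u = (1 / norm v) *\<^sub>R v"
    have nu: "norm u = 1" using False by (simp add: u_def)
    have vu: "v = norm v *\<^sub>R u" using False by (simp add: u_def)
    have "v \<bullet> (D *v v) = (norm v)^2 * (u \<bullet> (D *v u))"
      by (subst (1 2) vu) (simp add: matrix_vector_mult_scaleR power2_eq_square)
    then show ?thesis using z nu by simp
  qed
  have symm: "v \<bullet> (D *v u) = u \<bullet> (D *v v)" for u v
  proof -
    have "v \<bullet> (D *v u) = (u v* transpose D) \<bullet> v"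
      by (simp add: inner_commute)
    also have "\<dots> = u \<bullet> (transpose D *v v)" by (rule dot_lmul_matrix)
    also have "\<dots> = u \<bullet> (D *v v)" using sym by (simp add: symmetric_mat_def)
    finally show ?thesis .
  qed
  have cross: "u \<bullet> (D *v v) = 0" for u v
  proof -
    have "0 = (u + v) \<bullet> (D *v (u + v))" using all by simp
    also have "\<dots> = u \<bullet> (D *v u) + u \<bullet> (D *v v) + v \<bullet> (D *v u) + v \<bullet> (D *v v)"
      by (simp add: matrix_vector_right_distrib inner_add_left inner_add_right)
    also have "\<dots> = 2 * (u \<bullet> (D *v v))" using all symm[of v u] by simp
    finally show ?thesis by simp
  qed
  have "D *v v = 0" for v using cross[of "D *v v" v] by simp
  then show ?thesis by (simp add: matrix_eq)
qed

lemma Qmat_eq: "Qmat y x = Qf y x"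
  unfolding Qmat_def
proof (rule the_equality)
  show "symmetric_mat (Qf y x) \<and> (\<forall>w. norm w = 1 \<longrightarrow> w \<bullet> (Qf y x *v w) = (norm (y - quat_rot w *v x))\<^sup>2)"
    using sym_Qf quadQ_unit by blast
next
  fix Q assume a: "symmetric_mat Q \<and> (\<forall>w::real^4. norm w = 1 \<longrightarrow> w \<bullet> (Q *v w) = (norm (y - quat_rot w *v x))\<^sup>2)"
  have "Q - Qf y x = 0"
  proof (rule zero_form)
    show "symmetric_mat (Q - Qf y x)"
      using a sym_Qf by (simp add: symmetric_mat_def tr_diff)
    show "\<forall>w. norm w = 1 \<longrightarrow> w \<bullet> ((Q - Qf y x) *v w) = 0"
      using a quadQ_unit by (simp add: matrix_vector_mult_diff_rdistrib inner_diff_right)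
  qed
  then show "Q = Qf y x" by simp
qed

lemma normRx: "norm (quat_rot w *v x) = (norm w)^2 * norm x"
proof -
  have "(norm (quat_rot w *v x))^2 = ((norm w)^2 * norm x)^2"
    using normR[of w x] by (simp add: power_mult_distrib)
  then show ?thesis by (simp add: power2_eq_iff_nonneg)
qed

lemma psd_Qf: "psd_mat (Qf y x)"
  unfolding psd_mat_def
proof
  fix v :: "real^4"
  have cs: "y \<bullet> (quat_rot v *v x) \<le> norm y * ((norm v)^2 * norm x)"
    using norm_cauchy_schwarz[of y "quat_rot v *v x"] by (simp add: normRx)
  have eq: "((norm y)^2 + (norm x)^2) * (norm v)^2 - 2 * (norm y * ((norm v)^2 * norm x))
     = (norm v)^2 * (norm y - norm x)^2"
    by (simp add: algebra_simps power2_eq_square)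
  have "0 \<le> (norm v)^2 * (norm y - norm x)^2" by simp
  then show "0 \<le> v \<bullet> (Qf y x *v v)"
    unfolding quadQ using cs eq by linarith
qed
theorem lemma3p5:
  fixes R0s :: "real^3^3" and w0s :: "real^4" and x y eps :: "real^3"
  assumes "R0s \<in> SO3" and "norm w0s = 1" and "quat_rot w0s = R0s"
    and "y = R0s *v x + eps"
  shows "(\<forall>R0 w0. R0 \<in> SO3 \<longrightarrow> norm w0 = 1 \<longrightarrow> quat_rot w0 = R0 \<longrightarrow>
            (norm (y - R0 *v x))^2 = w0 \<bullet> (Qmat y x *v w0))
    \<and> (\<exists>P E :: real^4^4.
          symmetric_mat P \<and> symmetric_mat E \<and>
          Qmat y x = P + E + (norm eps)^2 *\<^sub>R mat 1 \<and>
          psd_mat P \<and>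
          eigenvalues_mset P {# 4 * (norm x)^2, 4 * (norm x)^2, 0, 0 #} \<and>
          P *v w0s = 0 \<and>
          (eps = 0 \<longrightarrow> Qmat y x *v w0s = 0 \<and> P *v w0s = 0) \<and>
          eigenvalues_mset E
            {# 2 * (eps \<bullet> (R0s *v x)) + 2 * norm eps * norm x,
               2 * (eps \<bullet> (R0s *v x)) + 2 * norm eps * norm x,
               2 * (eps \<bullet> (R0s *v x)) - 2 * norm eps * norm x,
               2 * (eps \<bullet> (R0s *v x)) - 2 * norm eps * norm x #} \<and>
          (\<forall>R0 w0. R0 \<in> SO3 \<longrightarrow> norm w0 = 1 \<longrightarrow> quat_rot w0 = R0 \<longrightarrow>
             w0 \<bullet> (E *v w0) = 2 * (eps \<bullet> (R0s *v x - R0 *v x))) \<and>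
          w0s \<bullet> (E *v w0s) = 0)"
proof -
  define y0 where "y0 = R0s *v x"
  define P where "P = ((norm y0)^2 + (norm x)^2) *\<^sub>R mat 1 - 2 *\<^sub>R Bm y0 x"
  define E where "E = (2 * (eps \<bullet> y0)) *\<^sub>R mat 1 - 2 *\<^sub>R Bm eps x"
  have QP: "Qmat y x = Qf y x" by (rule Qmat_eq)
  have ny0: "norm y0 = norm x"
    using normRx[of w0s x] assms(2,3) by (simp add: y0_def)
  have yy: "y = y0 + eps" using assms(4) by (simp add: y0_def)
  have ny: "(norm y)^2 = (norm y0)^2 + 2*(eps \<bullet> y0) + (norm eps)^2"
    by (simp add: yy power2_norm_eq_inner inner_add_left inner_add_right inner_commute)
  have decomp: "Qmat y x = P + E + (norm eps)^2 *\<^sub>R mat 1"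
    unfolding QP Qf_def P_def E_def ny
    by (simp add: yy Bm_add algebra_simps)
  have part1: "\<forall>R0 w0. R0 \<in> SO3 \<longrightarrow> norm w0 = 1 \<longrightarrow> quat_rot w0 = R0 \<longrightarrow>
            (norm (y - R0 *v x))^2 = w0 \<bullet> (Qmat y x *v w0)"
    using quadQ_unit by (simp add: QP)
  have symP: "symmetric_mat P" unfolding P_def by (rule sym_cB)
  have symE: "symmetric_mat E" unfolding E_def by (rule sym_cB)
  have psdP: "psd_mat P" using psd_Qf[of y0 x] by (simp add: P_def Qf_def)
  have eigP: "eigenvalues_mset P {# 4 * (norm x)^2, 4 * (norm x)^2, 0, 0 #}"
    unfolding eigenvalues_mset_def
  proof (intro conjI allI)
    fix t
    show "det (mat t - P) = prod_mset (image_mset (\<lambda>l. t - l) {# 4 * (norm x)^2, 4 * (norm x)^2, 0, 0 #})"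
      unfolding P_def detB ny0 by (simp add: algebra_simps power2_eq_square)
  qed simp
  have Pw: "P *v w0s = 0"
  proof -
    have y0q: "y0 = quat_rot w0s *v x" using assms(3) y0_def by simp
    have "P *v w0s = (2 * (norm x)^2) *\<^sub>R w0s - 2 *\<^sub>R (Bm y0 x *v w0s)"
      by (simp add: P_def ny0 matrix_vector_mult_diff_rdistrib mv_scale)
    also have "\<dots> = 0" by (simp add: y0q kerB assms(2))
    finally show ?thesis .
  qed
  have noiseless: "eps = 0 \<longrightarrow> Qmat y x *v w0s = 0 \<and> P *v w0s = 0"
    using decomp Pw by (simp add: E_def Bm_0 matrix_vector_mult_add_rdistrib)
  have eigE: "eigenvalues_mset E
            {# 2 * (eps \<bullet> (R0s *v x)) + 2 * norm eps * norm x,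
               2 * (eps \<bullet> (R0s *v x)) + 2 * norm eps * norm x,
               2 * (eps \<bullet> (R0s *v x)) - 2 * norm eps * norm x,
               2 * (eps \<bullet> (R0s *v x)) - 2 * norm eps * norm x #}"
    unfolding eigenvalues_mset_def
  proof (intro conjI allI)
    fix t
    show "det (mat t - E) = prod_mset (image_mset (\<lambda>l. t - l) {# 2 * (eps \<bullet> (R0s *v x)) + 2 * norm eps * norm x,
               2 * (eps \<bullet> (R0s *v x)) + 2 * norm eps * norm x,
               2 * (eps \<bullet> (R0s *v x)) - 2 * norm eps * norm x,
               2 * (eps \<bullet> (R0s *v x)) - 2 * norm eps * norm x #})"
      unfolding E_def detB y0_def by (simp add: algebra_simps power2_eq_square)
  qed simp
  have quadE: "\<forall>R0 w0. R0 \<in> SO3 \<longrightarrow> norm w0 = 1 \<longrightarrow> quat_rot w0 = R0 \<longrightarrow>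
             w0 \<bullet> (E *v w0) = 2 * (eps \<bullet> (R0s *v x - R0 *v x))"
  proof (intro allI impI)
    fix R0 w0 assume "R0 \<in> SO3" "norm w0 = (1::real)" "quat_rot w0 = R0"
    then have ww: "w0 \<bullet> w0 = 1" by (simp add: power2_norm_eq_inner[symmetric])
    show "w0 \<bullet> (E *v w0) = 2 * (eps \<bullet> (R0s *v x - R0 *v x))"
      unfolding E_def quad_cB using ww \<open>quat_rot w0 = R0\<close>
      by (simp add: y0_def inner_diff_right algebra_simps)
  qed
  have quadE0: "w0s \<bullet> (E *v w0s) = 0"
    using quadE assms(1,2,3) by simp
  show ?thesis
    apply (rule conjI[OF part1])
    apply (rule exI[of _ P], rule exI[of _ E])
    using symP symE decomp psdP eigP Pw noiseless eigE quadE quadE0 by blast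
qed

end
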